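(* Let $R$ be a ring. The set $\mathrm{Den}_l(R,0)$, ordered by inclusion and with the product $S_1S_2:=\langle S_1,S_2\rangle$ (the multiplicative subsemigroup of $R$ generated by $S_1$ and $S_2$), is an abelian monoid with identity $\{1\}$ and a complete lattice, in which $S_1S_2=S_1\vee S_2$ for all $S_1,S_2\in\mathrm{Den}_l(R,0)$, and for any family $S_i\in \mathrm{Den}_l(R,0)$, $i\in I$, the meet is $\bigwedge_{i\in I}S_i=\bigvee\{S\in \mathrm{Den}_l(R,0)\mid S\subseteq \bigcap_{i\in I}S_i\}$.
   Context: Rings are associative with $1$. A multiplicatively closed subset $S$ of a ring $R$ is a subset with $1\in S$, $0\notin S$, closed under multiplication. It is a left Ore set if $Sr\cap Rs\neq\emptyset$ for all $r\in R$, $s\in S$; then $\mathrm{ass}(S):=\{r\in R\mid sr=0 \text{ for some } s\in S\}$. A left Ore set $S$ is a left denominator set if $rs=0$ with $r\in R$, $s\in S$ implies $tr=0$ for some $t\in S$. $\mathrm{Den}_l(R,0)$ is the set of left denominator sets $S$ with $\mathrm{ass}(S)=0$ (equivalently, left denominator sets consisting of regular elements). *)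

theory Defs
  imports Main "HOL-Algebra.Group" "HOL-Algebra.Complete_Lattice"
begin

text \<open>Rings: the type class ring_1 (associative ring with 1; note 1 \<noteq> 0 is part of ring_1).\<close>

definition mult_closed :: "'a::ring_1 set \<Rightarrow> bool" where
  "mult_closed S \<longleftrightarrow> 1 \<in> S \<and> 0 \<notin> S \<and> (\<forall>a\<in>S. \<forall>b\<in>S. a * b \<in> S)"

definition left_ore :: "'a::ring_1 set \<Rightarrow> bool" where
  "left_ore S \<longleftrightarrow> mult_closed S \<and>
     (\<forall>r. \<forall>s\<in>S. \<exists>s'\<in>S. \<exists>r'. s' * r = r' * s)"

definition ass :: "'a::ring_1 set \<Rightarrow> 'a set" where
  "ass S = {r. \<exists>s\<in>S. s * r = 0}"

definition left_den :: "'a::ring_1 set \<Rightarrow> bool" where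
  "left_den S \<longleftrightarrow> left_ore S \<and>
     (\<forall>r. \<forall>s\<in>S. r * s = 0 \<longrightarrow> (\<exists>t\<in>S. t * r = 0))"

definition Den_l0 :: "'a::ring_1 set set" where
  "Den_l0 = {S. left_den S \<and> ass S = {0}}"

definition gen_subsemigroup :: "'a::ring_1 set \<Rightarrow> 'a set" where
  "gen_subsemigroup A = \<Inter>{T. A \<subseteq> T \<and> (\<forall>x\<in>T. \<forall>y\<in>T. x * y \<in> T)}"

definition den_prod :: "'a::ring_1 set \<Rightarrow> 'a set \<Rightarrow> 'a set" where
  "den_prod S1 S2 = gen_subsemigroup (S1 \<union> S2)"

definition Den_monoid :: "'a::ring_1 set monoid" where
  "Den_monoid = \<lparr>carrier = Den_l0, mult = den_prod, one = {1}\<rparr>"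

definition Den_order :: "'a::ring_1 set gorder" where
  "Den_order = \<lparr>carrier = Den_l0, eq = (=), le = (\<subseteq>)\<rparr>"

end

theory Submission
  imports Defs
begin

definition regl :: "'a::ring_1 \<Rightarrow> bool" where
  "regl s \<longleftrightarrow> (\<forall>r. s * r = 0 \<longrightarrow> r = 0) \<and> (\<forall>r. r * s = 0 \<longrightarrow> r = 0)"

lemma gen_sub: "A \<subseteq> gen_subsemigroup A"
  unfolding gen_subsemigroup_def by blast

lemma gen_closed: "x \<in> gen_subsemigroup A \<Longrightarrow> y \<in> gen_subsemigroup A \<Longrightarrow> x * y \<in> gen_subsemigroup A"
  unfolding gen_subsemigroup_def by blast

lemma gen_least: "A \<subseteq> T \<Longrightarrow> (\<forall>x\<in>T. \<forall>y\<in>T. x * y \<in> T) \<Longrightarrow> gen_subsemigroup A \<subseteq> T"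
  unfolding gen_subsemigroup_def by blast

lemma gen_induct:
  assumes "x \<in> gen_subsemigroup A" "\<And>a. a \<in> A \<Longrightarrow> P a"
    "\<And>x y. P x \<Longrightarrow> P y \<Longrightarrow> P (x * y)"
  shows "P x"
proof -
  have "gen_subsemigroup A \<subseteq> {x. P x}" using assms(2,3) by (intro gen_least) auto
  thus ?thesis using assms(1) by blast
qed

lemma gen_mono: "A \<subseteq> B \<Longrightarrow> gen_subsemigroup A \<subseteq> gen_subsemigroup B"
  by (meson gen_closed gen_least gen_sub order_trans)

lemma gen_idem: "(\<forall>x\<in>T. \<forall>y\<in>T. x * y \<in> T) \<Longrightarrow> gen_subsemigroup T = T"
  by (meson gen_least gen_sub order_refl subset_antisym)

lemma gen_gen: "gen_subsemigroup (gen_subsemigroup X \<union> Y) = gen_subsemigroup (X \<union> Y)"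
proof
  show "gen_subsemigroup (X \<union> Y) \<subseteq> gen_subsemigroup (gen_subsemigroup X \<union> Y)"
    by (rule gen_mono) (use gen_sub in blast)
  have "gen_subsemigroup X \<subseteq> gen_subsemigroup (X \<union> Y)" by (rule gen_mono) blast
  moreover have "Y \<subseteq> gen_subsemigroup (X \<union> Y)" using gen_sub by blast
  ultimately show "gen_subsemigroup (gen_subsemigroup X \<union> Y) \<subseteq> gen_subsemigroup (X \<union> Y)"
    by (intro gen_least) (auto intro: gen_closed)
qed

lemma Den_char:
  "S \<in> Den_l0 \<longleftrightarrow> 1 \<in> S \<and> (\<forall>a\<in>S. \<forall>b\<in>S. a * b \<in> S)
     \<and> (\<forall>r. \<forall>s\<in>S. \<exists>s'\<in>S. \<exists>r'. s' * r = r' * s) \<and> (\<forall>s\<in>S. regl s)"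
  (is "?L \<longleftrightarrow> ?R")
proof
  assume L: ?L
  hence ld: "left_den S" and as: "ass S = {0}" by (auto simp: Den_l0_def)
  have "regl s" if sS: "s \<in> S" for s
  proof -
    have a: "s * r = 0 \<Longrightarrow> r = 0" for r using as sS unfolding ass_def by blast
    have "r * s = 0 \<Longrightarrow> r = 0" for r
    proof -
      assume "r * s = 0"
      then obtain t where "t \<in> S" "t * r = 0" using ld sS unfolding left_den_def by blast
      thus "r = 0" using as unfolding ass_def by blast
    qed
    thus ?thesis using a unfolding regl_def by blast
  qed
  thus ?R using ld unfolding left_den_def left_ore_def mult_closed_def by blast
next
  assume R: ?R
  have z: "0 \<notin> S"
  proof
    assume "0 \<in> S"
    hence "regl (0::'a)" using R by blast
    hence "(1::'a) = 0" unfolding regl_def by (metis mult_zero_left)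
    thus False by simp
  qed
  have mc: "mult_closed S" using R z unfolding mult_closed_def by blast
  have dn: "\<forall>r. \<forall>s\<in>S. r * s = 0 \<longrightarrow> (\<exists>t\<in>S. t * r = 0)"
  proof (intro allI ballI impI)
    fix r s assume "s \<in> S" "r * s = 0"
    hence "r = 0" using R unfolding regl_def by blast
    thus "\<exists>t\<in>S. t * r = 0" using R by auto
  qed
  have "left_den S" using R mc dn unfolding left_den_def left_ore_def by blast
  moreover have "ass S = {0}"
  proof
    show "ass S \<subseteq> {0}"
    proof
      fix r assume "r \<in> ass S"
      then obtain s where "s \<in> S" "s * r = 0" unfolding ass_def by blast
      hence "r = 0" using R unfolding regl_def by blast
      thus "r \<in> {0}" by simp
    qed
    show "{0} \<subseteq> ass S" using R unfolding ass_def by force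
  qed
  ultimately show ?L unfolding Den_l0_def by blast
qed

lemma regl_mult: "regl a \<Longrightarrow> regl b \<Longrightarrow> regl (a * b)"
  unfolding regl_def by (metis mult.assoc)

definition Gsup :: "'a::ring_1 set set \<Rightarrow> 'a set" where
  "Gsup A = gen_subsemigroup (insert 1 (\<Union>A))"

lemma Gsup_Den:
  assumes "A \<subseteq> Den_l0"
  shows "Gsup A \<in> Den_l0"
proof -
  let ?G = "Gsup A"
  have one: "1 \<in> ?G" unfolding Gsup_def using gen_sub[of "insert 1 (\<Union>A)"] by blast
  have cl: "\<forall>a\<in>?G. \<forall>b\<in>?G. a * b \<in> ?G" unfolding Gsup_def using gen_closed by blast
  have sub: "S \<subseteq> ?G" if "S \<in> A" for S unfolding Gsup_def using gen_sub[of "insert 1 (\<Union>A)"] that by blast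
  have reg: "\<forall>s\<in>?G. regl s"
  proof
    fix s assume "s \<in> ?G"
    thus "regl s" unfolding Gsup_def
    proof (rule gen_induct)
      fix a assume "a \<in> insert 1 (\<Union>A)"
      thus "regl a"
      proof
        assume "a = 1" thus ?thesis unfolding regl_def by simp
      next
        assume "a \<in> \<Union>A"
        then obtain S where "S \<in> A" "a \<in> S" by blast
        moreover have "S \<in> Den_l0" using \<open>S \<in> A\<close> assms by blast
        ultimately show ?thesis unfolding Den_char by blast
      qed
    qed (rule regl_mult)
  qed
  have ore: "\<forall>r. \<exists>s'\<in>?G. \<exists>r'. s' * r = r' * s" if "s \<in> ?G" for s
    using that unfolding Gsup_def[of A, symmetric]
  proof (rule gen_induct[where A = "insert 1 (\<Union>A)", folded Gsup_def])
    fix a assume "a \<in> insert 1 (\<Union>A)"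
    then show "\<forall>r. \<exists>s'\<in>?G. \<exists>r'. s' * r = r' * a"
    proof
      assume "a = 1" thus ?thesis using one by (metis mult_1_left mult_1_right)
    next
      assume "a \<in> \<Union>A"
      then obtain S where S: "S \<in> A" "a \<in> S" by blast
      moreover have "S \<in> Den_l0" using S(1) assms by blast
      ultimately have "\<forall>r. \<exists>s'\<in>S. \<exists>r'. s' * r = r' * a" unfolding Den_char by blast
      thus ?thesis using sub[OF S(1)] by blast
    qed
  next
    fix x y
    assume x: "\<forall>r. \<exists>s'\<in>?G. \<exists>r'. s' * r = r' * x" and y: "\<forall>r. \<exists>s'\<in>?G. \<exists>r'. s' * r = r' * y"
    show "\<forall>r. \<exists>s'\<in>?G. \<exists>r'. s' * r = r' * (x * y)"
    proof
      fix r
      obtain t1 r1 where t1: "t1 \<in> ?G" "t1 * r = r1 * y" using y by blast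
      obtain t2 r2 where t2: "t2 \<in> ?G" "t2 * r1 = r2 * x" using x by blast
      have "(t2 * t1) * r = r2 * (x * y)"
        by (metis t1(2) t2(2) mult.assoc)
      moreover have "t2 * t1 \<in> ?G" using cl t1 t2 by blast
      ultimately show "\<exists>s'\<in>?G. \<exists>r'. s' * r = r' * (x * y)" by blast
    qed
  qed
  show ?thesis using one cl reg ore by (subst Den_char) blast
qed

lemma Gsup_upper: "S \<in> A \<Longrightarrow> S \<subseteq> Gsup A"
  unfolding Gsup_def using gen_sub[of "insert 1 (\<Union>A)"] by blast

lemma Gsup_least: "T \<in> Den_l0 \<Longrightarrow> (\<forall>S\<in>A. S \<subseteq> T) \<Longrightarrow> Gsup A \<subseteq> T"
  unfolding Gsup_def by (intro gen_least) (auto simp: Den_char)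

lemma Den_order_simps [simp]:
  "carrier Den_order = Den_l0" "le Den_order = (\<subseteq>)" "eq Den_order = (=)"
  by (simp_all add: Den_order_def)

lemma Den_po: "partial_order (Den_order :: 'a::ring_1 set gorder)"
  by unfold_locales auto

lemma least_Gsup:
  assumes "A \<subseteq> Den_l0"
  shows "least Den_order (Gsup A) (Upper Den_order A)"
proof -
  have up: "Gsup A \<in> Upper Den_order A"
    unfolding Upper_def using Gsup_Den[OF assms] Gsup_upper[of _ A] by auto
  have "Gsup A \<subseteq> x" if "x \<in> Upper Den_order A" for x
  proof -
    have "x \<in> Den_l0" "\<forall>S\<in>A. S \<subseteq> x" using that assms unfolding Upper_def by auto
    thus ?thesis by (rule Gsup_least)
  qed
  moreover have "Upper Den_order A \<subseteq> carrier Den_order" by (rule Upper_closed)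
  ultimately show ?thesis unfolding least_def using up by auto
qed

lemma sup_Den:
  assumes "A \<subseteq> Den_l0"
  shows "Lattice.sup Den_order A = Gsup A"
proof -
  have l: "least Den_order (Gsup A) (Upper Den_order A)" using assms by (rule least_Gsup)
  have "least Den_order x (Upper Den_order A) \<Longrightarrow> x = Gsup A" for x
    using l unfolding least_def by auto
  thus ?thesis unfolding Lattice.sup_def using l by (metis someI)
qed

lemma greatest_Gsup:
  assumes "A \<subseteq> Den_l0"
  shows "greatest Den_order (Gsup (Lower Den_order A)) (Lower Den_order A)"
proof -
  have LD: "Lower Den_order A \<subseteq> Den_l0" unfolding Lower_def by auto
  have "Gsup (Lower Den_order A) \<subseteq> T" if "T \<in> A" for T
    using that assms by (intro Gsup_least) (auto simp: Lower_def)
  hence mem: "Gsup (Lower Den_order A) \<in> Lower Den_order A"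
    using Gsup_Den[OF LD] unfolding Lower_def by auto
  have "\<forall>x\<in>Lower Den_order A. x \<subseteq> Gsup (Lower Den_order A)"
    using Gsup_upper[of _ "Lower Den_order A"] by blast
  thus ?thesis unfolding greatest_def using LD mem by auto
qed

lemma inf_Den:
  assumes "A \<subseteq> Den_l0"
  shows "Lattice.inf Den_order A = Gsup (Lower Den_order A)"
proof -
  have g: "greatest Den_order (Gsup (Lower Den_order A)) (Lower Den_order A)"
    using assms by (rule greatest_Gsup)
  have "greatest Den_order x (Lower Den_order A) \<Longrightarrow> x = Gsup (Lower Den_order A)" for x
    using g unfolding greatest_def by auto
  thus ?thesis unfolding Lattice.inf_def using g by (metis someI)
qed

lemma Den_cl: "complete_lattice (Den_order :: 'a::ring_1 set gorder)"
proof -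
  interpret partial_order "Den_order :: 'a set gorder" by (rule Den_po)
  show ?thesis
  proof (rule complete_latticeI)
    fix A :: "'a set set" assume A: "A \<subseteq> carrier Den_order"
    have "least Den_order (Gsup A) (Upper Den_order A)"
      using A by (intro least_Gsup) simp
    thus "\<exists>s. least Den_order s (Upper Den_order A)" by blast
  next
    fix A :: "'a set set" assume A: "A \<subseteq> carrier Den_order"
    have "greatest Den_order (Gsup (Lower Den_order A)) (Lower Den_order A)"
      using A by (intro greatest_Gsup) simp
    thus "\<exists>i. greatest Den_order i (Lower Den_order A)" by blast
  qed
qed

lemma prod_Gsup: "S1 \<in> Den_l0 \<Longrightarrow> den_prod S1 S2 = Gsup {S1, S2}"
  unfolding den_prod_def Gsup_def by (auto simp: Den_char intro!: arg_cong[where f=gen_subsemigroup])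

lemma Den_one: "{1} \<in> Den_l0"
  by (auto simp: Den_char regl_def)

lemma Den_mon: "comm_monoid (Den_monoid :: 'a::ring_1 set monoid)"
proof (rule comm_monoidI)
  fix x y :: "'a set" assume "x \<in> carrier Den_monoid" "y \<in> carrier Den_monoid"
  thus "x \<otimes>\<^bsub>Den_monoid\<^esub> y \<in> carrier Den_monoid"
    by (auto simp: Den_monoid_def prod_Gsup intro!: Gsup_Den)
next
  show "\<one>\<^bsub>Den_monoid\<^esub> \<in> carrier (Den_monoid :: 'a set monoid)"
    using Den_one by (simp add: Den_monoid_def)
next
  fix x y z :: "'a set"
  show "x \<otimes>\<^bsub>Den_monoid\<^esub> y \<otimes>\<^bsub>Den_monoid\<^esub> z = x \<otimes>\<^bsub>Den_monoid\<^esub> (y \<otimes>\<^bsub>Den_monoid\<^esub> z)"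
    unfolding Den_monoid_def den_prod_def
    by simp (metis gen_gen sup_commute sup_assoc)
next
  fix x :: "'a set" assume "x \<in> carrier Den_monoid"
  hence "x \<in> Den_l0" by (simp add: Den_monoid_def)
  thus "\<one>\<^bsub>Den_monoid\<^esub> \<otimes>\<^bsub>Den_monoid\<^esub> x = x"
    unfolding Den_monoid_def den_prod_def
    by (simp add: Den_char insert_absorb gen_idem)
next
  fix x y :: "'a set"
  show "x \<otimes>\<^bsub>Den_monoid\<^esub> y = y \<otimes>\<^bsub>Den_monoid\<^esub> x"
    unfolding Den_monoid_def den_prod_def by (simp add: sup_commute)
qed

theorem corollary2p5:
  shows "comm_monoid (Den_monoid :: 'a::ring_1 set monoid)
    \<and> complete_lattice (Den_order :: 'a set gorder)
    \<and> (\<forall>S1\<in>(Den_l0 :: 'a set set). \<forall>S2\<in>Den_l0.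
          den_prod S1 S2 = join Den_order S1 S2)
    \<and> (\<forall>(I :: 'i set) (F :: 'i \<Rightarrow> 'a set). F ` I \<subseteq> Den_l0 \<longrightarrow>
          infi Den_order I F = Lattice.sup Den_order {S \<in> Den_l0. S \<subseteq> (\<Inter>i\<in>I. F i)})"
proof (intro conjI ballI allI impI)
  show "comm_monoid (Den_monoid :: 'a::ring_1 set monoid)" by (rule Den_mon)
  show "complete_lattice (Den_order :: 'a set gorder)" by (rule Den_cl)
next
  fix S1 S2 :: "'a set" assume "S1 \<in> Den_l0" "S2 \<in> Den_l0"
  thus "den_prod S1 S2 = join Den_order S1 S2"
    by (simp add: join_def sup_Den prod_Gsup)
next
  fix I :: "'i set" and F :: "'i \<Rightarrow> 'a set" assume F: "F ` I \<subseteq> Den_l0"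
  have "Lower Den_order (F ` I) = {S \<in> Den_l0. S \<subseteq> (\<Inter>i\<in>I. F i)}"
    unfolding Lower_def using F by auto
  moreover have "{S \<in> Den_l0. S \<subseteq> (\<Inter>i\<in>I. F i)} \<subseteq> (Den_l0 :: 'a set set)" by blast
  ultimately show "infi Den_order I F = Lattice.sup Den_order {S \<in> Den_l0. S \<subseteq> (\<Inter>i\<in>I. F i)}"
    unfolding infi_def using F by (simp add: inf_Den sup_Den)
qed

end
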